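(* If $A\subseteq\Omega$ is finite, then $A\in\mathcal{B}_{\mathcal{L}}$ and $\widehat{\mu}(A)=0$; that is, $A=\bigcap_n A^{(n)}$ and $\lim_{n\to\infty}\mu(A^{(n)})=0$.
   Context: For $n\ge1$, $\Omega_n$ is the set of strings $\alpha_0\alpha_1\cdots\alpha_n$ with $\alpha_k\in\{0,1\}$, $\alpha_0=0$. For $\omega=\alpha_0\cdots\alpha_n$, $\omega'=\alpha'_0\cdots\alpha'_n\in\Omega_n$ let $D^n(\omega,\omega')=2^{-n}\prod_{k=1}^n i^{|\alpha_k-\alpha_{k-1}|}\prod_{k=1}^n i^{-|\alpha'_k-\alpha'_{k-1}|}\,\delta_{\alpha_n\alpha'_n}$ ($i=\sqrt{-1}$) and for $E\subseteq\Omega_n$, $\mu_n(E)=\sum_{\omega,\omega'\in E}D^n(\omega,\omega')$. $\Omega$ is the set of infinite sequences $\alpha_0\alpha_1\cdots$ with $\alpha_k\in\{0,1\}$, $\alpha_0=0$. A cylinder set is a set $\{\alpha_0\alpha_1\cdots\in\Omega:\alpha_0\cdots\alpha_n\in E\}$ with $E\subseteq\Omega_n$, and $\mu$ of it is $\mu_n(E)$ (well defined). For $A\subseteq\Omega$ and $n\ge0$, $A^{(n)}=\{\omega\in\Omega:\text{some }\omega'\in A\text{ has the same first }n+1\text{ entries as }\omega\}$ (a cylinder set). $A$ is a lower set if $A=\bigcap_nA^{(n)}$; $A$ is beneficial if $\lim_n\mu(A^{(n)})$ exists and is finite, with $\widehat{\mu}(A)$ that limit; $\mathcal{B}_{\mathcal{L}}$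 is the collection of beneficial lower sets. *)

theory Defs
  imports Complex_Main
begin

text \<open>Binary digits are encoded as bool: False = 0, True = 1.
  Finite strings alpha_0 ... alpha_n are lists of length n+1;
  infinite sequences are functions nat \<Rightarrow> bool.\<close>

definition Omega_n :: "nat \<Rightarrow> bool list set" where
  "Omega_n n = {w. length w = Suc n \<and> w ! 0 = False}"

definition jump :: "bool list \<Rightarrow> nat \<Rightarrow> nat" where
  "jump w k = (if w ! k = w ! (k - 1) then 0 else 1)"

definition D :: "nat \<Rightarrow> bool list \<Rightarrow> bool list \<Rightarrow> complex" where
  "D n w w' = (1 / 2 ^ n)
     * (\<Prod>k\<in>{1..n}. \<i> powi int (jump w k))
     * (\<Prod>k\<in>{1..n}. \<i> powi (- int (jump w' k)))
     * (if w ! n = w' ! n then 1 else 0)"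

definition mu_n :: "nat \<Rightarrow> bool list set \<Rightarrow> complex" where
  "mu_n n E = (\<Sum>w\<in>E. \<Sum>w'\<in>E. D n w w')"

definition Omega :: "(nat \<Rightarrow> bool) set" where
  "Omega = {a. a 0 = False}"

definition prefix :: "nat \<Rightarrow> (nat \<Rightarrow> bool) \<Rightarrow> bool list" where
  "prefix n a = map a [0..<Suc n]"

text \<open>Measure of a cylinder set C represented at level n,
  i.e. C = {a \<in> Omega. prefix n a \<in> E} with E = prefix n ` C.\<close>
definition mu_cyl :: "nat \<Rightarrow> (nat \<Rightarrow> bool) set \<Rightarrow> complex" where
  "mu_cyl n C = mu_n n (prefix n ` C)"

definition approx :: "(nat \<Rightarrow> bool) set \<Rightarrow> nat \<Rightarrow> (nat \<Rightarrow> bool) set" where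
  "approx A n = {w \<in> Omega. \<exists>w'\<in>A. prefix n w = prefix n w'}"

definition lower_set :: "(nat \<Rightarrow> bool) set \<Rightarrow> bool" where
  "lower_set A \<longleftrightarrow> A = (\<Inter>n. approx A n)"

definition beneficial :: "(nat \<Rightarrow> bool) set \<Rightarrow> bool" where
  "beneficial A \<longleftrightarrow> convergent (\<lambda>n. mu_cyl n (approx A n))"

definition mu_hat :: "(nat \<Rightarrow> bool) set \<Rightarrow> complex" where
  "mu_hat A = lim (\<lambda>n. mu_cyl n (approx A n))"

definition B_L :: "(nat \<Rightarrow> bool) set set" where
  "B_L = {A. A \<subseteq> Omega \<and> lower_set A \<and> beneficial A}"

end

theory Submission
  imports Defs
begin

lemma norm_D: "norm (D n w w') \<le> 1 / 2 ^ n"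
proof -
  have p1: "norm (\<Prod>k\<in>{1..n}. \<i> powi int (jump w k)) = 1"
    by (simp add: prod_norm[symmetric] norm_power_int norm_power)
  have p2: "norm (\<Prod>k\<in>{1..n}. \<i> powi (- int (jump w' k))) = 1"
    by (simp add: prod_norm[symmetric] norm_power_int norm_power)
  have p3: "norm (if w ! n = w' ! n then 1 else 0 :: complex) \<le> 1" by simp
  have "norm (D n w w') = (1/2^n) * 1 * 1 * norm (if w ! n = w' ! n then 1 else 0 :: complex)"
    unfolding D_def norm_mult using p1 p2 by (simp add: norm_divide norm_power)
  also have "\<dots> \<le> 1/2^n" using p3 by (simp add: mult_left_le)
  finally show ?thesis .
qed

lemma norm_mu_n:
  assumes "finite E"
  shows "norm (mu_n n E) \<le> real (card E) ^ 2 * (1/2) ^ n"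
proof -
  have "norm (mu_n n E) \<le> (\<Sum>w\<in>E. \<Sum>w'\<in>E. norm (D n w w'))"
    unfolding mu_n_def by (rule order_trans[OF norm_sum sum_mono[OF norm_sum]])
  also have "\<dots> \<le> (\<Sum>w\<in>E. \<Sum>w'\<in>E. 1/2^n)"
    by (intro sum_mono norm_D)
  also have "\<dots> = real (card E) ^ 2 * (1/2) ^ n"
    by (simp add: power2_eq_square power_one_over)
  finally show ?thesis .
qed

lemma prefix_approx:
  assumes "A \<subseteq> Omega"
  shows "prefix n ` approx A n = prefix n ` A"
proof
  show "prefix n ` approx A n \<subseteq> prefix n ` A"
    unfolding approx_def by auto
  show "prefix n ` A \<subseteq> prefix n ` approx A n"
    using assms unfolding approx_def by blast
qed

lemma prefix_eq_nth:
  assumes "prefix n a = prefix n b" "k \<le> n"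
  shows "a k = b k"
proof -
  have "prefix n a ! k = prefix n b ! k" using assms by simp
  then show ?thesis using assms(2) unfolding prefix_def
    by (simp del: upt_Suc add: nth_map_upt)
qed

lemma lower:
  assumes "A \<subseteq> Omega" "finite A"
  shows "A = (\<Inter>n. approx A n)"
proof
  show "A \<subseteq> (\<Inter>n. approx A n)" using assms(1) unfolding approx_def by blast
  show "(\<Inter>n. approx A n) \<subseteq> A"
  proof
    fix w assume w: "w \<in> (\<Inter>n. approx A n)"
    show "w \<in> A"
    proof (rule ccontr)
      assume nw: "w \<notin> A"
      have "\<forall>a\<in>A. \<exists>k. a k \<noteq> w k"
      proof
        fix a assume "a \<in> A"
        then have "a \<noteq> w" using nw by auto
        then show "\<exists>k. a k \<noteq> w k" by auto
      qed
      then obtain f where f: "\<And>a. a \<in> A \<Longrightarrow> a (f a) \<noteq> w (f a)" by metis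
      define N where "N = (if A = {} then 0 else Max (f ` A))"
      have le: "\<And>a. a \<in> A \<Longrightarrow> f a \<le> N"
        unfolding N_def using assms(2) by auto
      from w have "w \<in> approx A N" by blast
      then obtain a where a: "a \<in> A" "prefix N w = prefix N a"
        unfolding approx_def by blast
      have "w (f a) = a (f a)" using prefix_eq_nth[OF a(2) le[OF a(1)]] .
      with f[OF a(1)] show False by simp
    qed
  qed
qed

lemma lim0:
  assumes "A \<subseteq> Omega" "finite A"
  shows "(\<lambda>n. mu_cyl n (approx A n)) \<longlonglongrightarrow> 0"
proof -
  have b: "norm (mu_cyl n (approx A n)) \<le> real (card A) ^ 2 * (1/2) ^ n" for n
  proof -
    have "norm (mu_cyl n (approx A n)) = norm (mu_n n (prefix n ` A))"
      unfolding mu_cyl_def prefix_approx[OF assms(1)] ..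
    also have "\<dots> \<le> real (card (prefix n ` A)) ^ 2 * (1/2) ^ n"
      using assms(2) by (intro norm_mu_n) auto
    also have "\<dots> \<le> real (card A) ^ 2 * (1/2) ^ n"
      using card_image_le[OF assms(2), of "prefix n"]
      by (intro mult_right_mono power_mono) auto
    finally show ?thesis .
  qed
  have "(\<lambda>n. real (card A) ^ 2 * (1/2) ^ n) \<longlonglongrightarrow> 0"
    by (intro tendsto_mult_right_zero LIMSEQ_realpow_zero) auto
  then show ?thesis
    by (rule tendsto_0_le[where K=1]) (use b in auto)
qed

theorem lemma3p4:
  fixes A :: "(nat \<Rightarrow> bool) set"
  assumes "A \<subseteq> Omega" and "finite A"
  shows "A \<in> B_L \<and> mu_hat A = 0 \<and> A = (\<Inter>n. approx A n)
         \<and> (\<lambda>n. mu_cyl n (approx A n)) \<longlonglongrightarrow> 0"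
proof -
  have l: "(\<lambda>n. mu_cyl n (approx A n)) \<longlonglongrightarrow> 0" by (rule lim0[OF assms])
  have lo: "A = (\<Inter>n. approx A n)" by (rule lower[OF assms])
  have "beneficial A" unfolding beneficial_def using l by (rule convergentI)
  moreover have "mu_hat A = 0" unfolding mu_hat_def using l by (rule limI)
  ultimately show ?thesis using l lo assms(1)
    unfolding B_L_def lower_set_def by auto
qed

end
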